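(* Let $n\ge1$ and $a=(a_0,\dots,a_n)\in\mathbb{Z}^{n+1}$ with $a_i\ge 0$ for all $i$ and $a_0=a_n=0$. Let $m\ge 0$ and let $0=c_0<c_1<\cdots<c_m<c_{m+1}=1$ and $0=e_0<e_1<\cdots<e_m<e_{m+1}=1$ be real numbers. Assume that a tropical recurrent minimal sequence $y=(y_i)_{i\in\mathbb{Z}}$ satisfies $a$. For each $i\in\mathbb{Z}$ let $0\le j\le m$ be the unique index with $c_j\le \langle y_i\rangle<c_{j+1}$ and put $x_i:=\lfloor y_i\rfloor+e_j$. Then $x=(x_i)_{i\in\mathbb{Z}}$ is also a tropical recurrent minimal sequence satisfying $a$.
   Context: $\langle e\rangle=e-\lfloor e\rfloor$ denotes the fractional part of a real $e$. A tropical recurrent sequence is $y=(y_j)_{j\in\mathbb{Z}}$ with real entries; it satisfies $a$ if for every $k\in\mathbb{Z}$ the minimum $\min_{0\le i\le n}\{a_i+y_{i+k}\}$ is attained for at least two different indices $i$; it is minimal if for every $j\in\mathbb{Z}$ there is $k$ with $j-n\le k\le j$ and $a_{j-k}+y_j=\min_{0\le i\le n}\{a_i+y_{i+k}\}$. *)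

theory Defs
  imports Complex_Main
begin

definition trop_min :: "nat \<Rightarrow> (nat \<Rightarrow> int) \<Rightarrow> (int \<Rightarrow> real) \<Rightarrow> int \<Rightarrow> real" where
  "trop_min n a y k = Min ((\<lambda>i. real_of_int (a i) + y (int i + k)) ` {0..n})"

definition trop_satisfies :: "nat \<Rightarrow> (nat \<Rightarrow> int) \<Rightarrow> (int \<Rightarrow> real) \<Rightarrow> bool" where
  "trop_satisfies n a y \<longleftrightarrow> (\<forall>k::int. \<exists>i1 i2. i1 \<le> n \<and> i2 \<le> n \<and> i1 \<noteq> i2 \<and>
      real_of_int (a i1) + y (int i1 + k) = trop_min n a y k \<and>
      real_of_int (a i2) + y (int i2 + k) = trop_min n a y k)"

definition trop_minimal :: "nat \<Rightarrow> (nat \<Rightarrow> int) \<Rightarrow> (int \<Rightarrow> real) \<Rightarrow> bool" where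
  "trop_minimal n a y \<longleftrightarrow> (\<forall>j::int. \<exists>k::int. j - int n \<le> k \<and> k \<le> j \<and>
      real_of_int (a (nat (j - k))) + y j = trop_min n a y k)"

definition fracpart :: "real \<Rightarrow> real" where
  "fracpart r = r - real_of_int \<lfloor>r\<rfloor>"

end

theory Submission
  imports Defs
begin

lemma seq_mono_le:
  fixes c :: "nat \<Rightarrow> real"
  assumes "\<forall>j\<le>m. c j < c (Suc j)" "i \<le> j" "j \<le> m + 1"
  shows "c i \<le> c j"
  using assms(2,3)
proof (induction j)
  case 0 then show ?case by simp
next
  case (Suc j)
  show ?case
  proof (cases "i = Suc j")
    case False
    then have "c i \<le> c j" using Suc by simp
    also have "c j < c (Suc j)" using assms(1) Suc.prems by simp
    finally show ?thesis by simp
  qed simp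
qed

lemma the_idx:
  fixes c :: "nat \<Rightarrow> real"
  assumes "c 0 = 0" "c (m + 1) = 1" "\<forall>j\<le>m. c j < c (Suc j)" "0 \<le> r" "r < 1"
  shows "\<exists>!j. j \<le> m \<and> c j \<le> r \<and> r < c (Suc j)"
proof -
  define j where "j = Max {j. j \<le> m \<and> c j \<le> r}"
  have fin: "finite {j. j \<le> m \<and> c j \<le> r}" by simp
  have ne: "0 \<in> {j. j \<le> m \<and> c j \<le> r}" using assms by simp
  have j1: "j \<le> m \<and> c j \<le> r" using Max_in[OF fin] ne unfolding j_def by blast
  have j2: "r < c (Suc j)"
  proof (cases "j = m")
    case True then show ?thesis using assms by simp
  next
    case False
    then have "Suc j \<le> m" using j1 by simp
    moreover have "Suc j \<notin> {j. j \<le> m \<and> c j \<le> r}"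
      using Max_ge[OF fin] unfolding j_def[symmetric] by fastforce
    ultimately show ?thesis by simp
  qed
  show ?thesis
  proof (rule ex1I[of _ j])
    show "j \<le> m \<and> c j \<le> r \<and> r < c (Suc j)" using j1 j2 by simp
  next
    fix k assume k: "k \<le> m \<and> c k \<le> r \<and> r < c (Suc k)"
    show "k = j"
    proof (rule ccontr)
      assume "k \<noteq> j"
      then have "k < j \<or> j < k" by arith
      then show False
      proof
        assume "k < j"
        then have "c (Suc k) \<le> c j" using seq_mono_le[OF assms(3), of "Suc k" j] j1 by simp
        then show False using k j1 by simp
      next
        assume "j < k"
        then have "c (Suc j) \<le> c k" using seq_mono_le[OF assms(3), of "Suc j" k] k by simp
        then show False using k j2 by simp
      qed
    qed
  qed
qed

lemma trop_transfer:
  fixes f :: "real \<Rightarrow> real" and y :: "int \<Rightarrow> real"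
  assumes mono: "mono f" and shift: "\<And>z t. f (real_of_int z + t) = real_of_int z + f t"
    and min: "trop_minimal n a y" and sat: "trop_satisfies n a y"
  shows "trop_minimal n a (\<lambda>i. f (y i)) \<and> trop_satisfies n a (\<lambda>i. f (y i))"
proof -
  have tm: "trop_min n a (\<lambda>i. f (y i)) k = f (trop_min n a y k)" for k
  proof -
    have "(\<lambda>i. real_of_int (a i) + f (y (int i + k))) ` {0..n}
        = f ` ((\<lambda>i. real_of_int (a i) + y (int i + k)) ` {0..n})"
      by (auto simp: shift image_image)
    then show ?thesis unfolding trop_min_def
      using mono_Min_commute[OF mono, of "(\<lambda>i. real_of_int (a i) + y (int i + k)) ` {0..n}"]
      by simp
  qed
  have ev: "real_of_int (a i) + f (y j) = f (real_of_int (a i) + y j)" for i j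
    by (simp add: shift)
  show ?thesis
    unfolding trop_minimal_def trop_satisfies_def tm ev
    using min sat unfolding trop_minimal_def trop_satisfies_def
    by metis
qed

theorem lemma3:
  fixes n m :: nat and a :: "nat \<Rightarrow> int" and c e :: "nat \<Rightarrow> real" and y :: "int \<Rightarrow> real"
  assumes "n \<ge> 1"
    and "\<forall>i\<le>n. a i \<ge> 0" and "a 0 = 0" and "a n = 0"
    and "c 0 = 0" and "c (m + 1) = 1" and "\<forall>j\<le>m. c j < c (Suc j)"
    and "e 0 = 0" and "e (m + 1) = 1" and "\<forall>j\<le>m. e j < e (Suc j)"
    and "trop_minimal n a y" and "trop_satisfies n a y"
  shows "let x = (\<lambda>i. real_of_int \<lfloor>y i\<rfloor> +
                  e (THE j. j \<le> m \<and> c j \<le> fracpart (y i) \<and> fracpart (y i) < c (Suc j)))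
         in trop_minimal n a x \<and> trop_satisfies n a x"
proof -
  define J where "J r = (THE j. j \<le> m \<and> c j \<le> r \<and> r < c (Suc j))" for r
  define f where "f t = real_of_int \<lfloor>t\<rfloor> + e (J (fracpart t))" for t
  have fr: "0 \<le> fracpart t \<and> fracpart t < 1" for t
    unfolding fracpart_def by linarith
  have Jp: "J (fracpart t) \<le> m \<and> c (J (fracpart t)) \<le> fracpart t \<and> fracpart t < c (Suc (J (fracpart t)))" for t
    unfolding J_def using theI'[OF the_idx[OF assms(5,6,7) conjunct1[OF fr] conjunct2[OF fr]]] .
  have e01: "0 \<le> e (J (fracpart t)) \<and> e (J (fracpart t)) < 1" for t
  proof -
    have "e 0 \<le> e (J (fracpart t))" using seq_mono_le[OF assms(10), of 0 "J (fracpart t)"] Jp[of t] by simp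
    moreover have "e (J (fracpart t)) < e (Suc (J (fracpart t)))" using assms(10) Jp by simp
    moreover have "e (Suc (J (fracpart t))) \<le> e (m+1)" using seq_mono_le[OF assms(10), of "Suc (J (fracpart t))" "m+1"] Jp[of t] by simp
    ultimately show ?thesis using assms(8,9) by simp
  qed
  have mono: "mono f"
  proof (rule monoI)
    fix t s :: real assume ts: "t \<le> s"
    show "f t \<le> f s"
    proof (cases "\<lfloor>t\<rfloor> < \<lfloor>s\<rfloor>")
      case True
      then have "real_of_int \<lfloor>t\<rfloor> + 1 \<le> real_of_int \<lfloor>s\<rfloor>" by linarith
      then show ?thesis unfolding f_def using e01[of t] e01[of s] by linarith
    next
      case False
      then have fl: "\<lfloor>t\<rfloor> = \<lfloor>s\<rfloor>" using ts floor_mono by (metis antisym not_less)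
      then have "fracpart t \<le> fracpart s" unfolding fracpart_def using ts by simp
      have "J (fracpart t) \<le> J (fracpart s)"
      proof (rule ccontr)
        assume "\<not> ?thesis"
        then have "Suc (J (fracpart s)) \<le> J (fracpart t)" by simp
        then have "c (Suc (J (fracpart s))) \<le> c (J (fracpart t))"
          using seq_mono_le[OF assms(7)] Jp[of t] by simp
        then show False using Jp[of t] Jp[of s] \<open>fracpart t \<le> fracpart s\<close> by simp
      qed
      then have "e (J (fracpart t)) \<le> e (J (fracpart s))"
        using seq_mono_le[OF assms(10)] Jp[of s] by simp
      then show ?thesis unfolding f_def using fl by simp
    qed
  qed
  have shift: "f (real_of_int z + t) = real_of_int z + f t" for z t
  proof -
    have "\<lfloor>real_of_int z + t\<rfloor> = z + \<lfloor>t\<rfloor>" by linarith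
    moreover then have "fracpart (real_of_int z + t) = fracpart t" unfolding fracpart_def by simp
    ultimately show ?thesis unfolding f_def by simp
  qed
  have "trop_minimal n a (\<lambda>i. f (y i)) \<and> trop_satisfies n a (\<lambda>i. f (y i))"
    using trop_transfer[OF mono shift assms(11,12)] .
  then show ?thesis unfolding Let_def f_def J_def .
qed

end
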